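(* Let $n \geq 3$ and let $S$ be a $4$-cap free, $n$-cup free configuration of size at least $\binom{n-1}{2}+1$, with a fixed slope labeling. For each $1 \le i \le n-1$ let $R_i(S) = \{p\in S : \beta(p)=i\}$. Then $R_i(S)$ is nonempty for every $1 \leq i \leq n-1$.
   Context: A configuration is a finite set $S$ of points with a linear order $<$ and, for every $3$-element subset, an arbitrary assignment declaring it either a cap or a cup. Points $x_1<\cdots<x_a$ form an $a$-cup (resp. $a$-cap) if every consecutive triple $\{x_{i-1},x_i,x_{i+1}\}$, $1<i<a$, is assigned cup (resp. cap); $1$- and $2$-element sets are both caps and cups. The length of a cup is its number of points; a cup $x_1\cdots x_a$ ends with $x_a$. An edge is a pair $x<y$, written $xy$. A slope labeling of a $4$-cap free configuration is an assignment $s(xy)\in\{1,2\}$ to every edge such that for any $x<y<z$, $s(xy)\le s(yz)$ implies $\{x,y,z\}$ is a $3$-cup. For $p \in S$, $\beta(p)$ denotes the maximum length of a cup that ends with $p$. *)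

theory Defs
  imports Main
begin

text \<open>A configuration: a finite set S in a linearly ordered type, together with a
predicate cup; for x < y < z the triple {x,y,z} is a cup iff cup x y z, and a cap
otherwise (every triple is exactly one of the two).\<close>

definition is_cup :: "('a::linorder \<Rightarrow> 'a \<Rightarrow> 'a \<Rightarrow> bool) \<Rightarrow> 'a set \<Rightarrow> 'a list \<Rightarrow> bool" where
  "is_cup cup S xs \<longleftrightarrow> sorted_wrt (<) xs \<and> set xs \<subseteq> S \<and>
     (\<forall>i. 0 < i \<and> i + 1 < length xs \<longrightarrow> cup (xs ! (i - 1)) (xs ! i) (xs ! (i + 1)))"

definition is_cap :: "('a::linorder \<Rightarrow> 'a \<Rightarrow> 'a \<Rightarrow> bool) \<Rightarrow> 'a set \<Rightarrow> 'a list \<Rightarrow> bool" where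
  "is_cap cup S xs \<longleftrightarrow> sorted_wrt (<) xs \<and> set xs \<subseteq> S \<and>
     (\<forall>i. 0 < i \<and> i + 1 < length xs \<longrightarrow> \<not> cup (xs ! (i - 1)) (xs ! i) (xs ! (i + 1)))"

definition cap_free :: "nat \<Rightarrow> ('a::linorder \<Rightarrow> 'a \<Rightarrow> 'a \<Rightarrow> bool) \<Rightarrow> 'a set \<Rightarrow> bool" where
  "cap_free a cup S \<longleftrightarrow> \<not> (\<exists>xs. is_cap cup S xs \<and> length xs = a)"

definition cup_free :: "nat \<Rightarrow> ('a::linorder \<Rightarrow> 'a \<Rightarrow> 'a \<Rightarrow> bool) \<Rightarrow> 'a set \<Rightarrow> bool" where
  "cup_free a cup S \<longleftrightarrow> \<not> (\<exists>xs. is_cup cup S xs \<and> length xs = a)"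

definition slope_labeling :: "('a::linorder \<Rightarrow> 'a \<Rightarrow> 'a \<Rightarrow> bool) \<Rightarrow> 'a set \<Rightarrow> ('a \<Rightarrow> 'a \<Rightarrow> nat) \<Rightarrow> bool" where
  "slope_labeling cup S s \<longleftrightarrow>
     (\<forall>x\<in>S. \<forall>y\<in>S. x < y \<longrightarrow> s x y \<in> {1, 2}) \<and>
     (\<forall>x\<in>S. \<forall>y\<in>S. \<forall>z\<in>S. x < y \<and> y < z \<and> s x y \<le> s y z \<longrightarrow> cup x y z)"

definition beta :: "('a::linorder \<Rightarrow> 'a \<Rightarrow> 'a \<Rightarrow> bool) \<Rightarrow> 'a set \<Rightarrow> 'a \<Rightarrow> nat" where
  "beta cup S p = Max {length xs | xs. is_cup cup S xs \<and> xs \<noteq> [] \<and> last xs = p}"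

end

theory Submission
  imports Defs
begin

lemma cup_len:
  assumes "finite S" "is_cup cup S xs"
  shows "length xs \<le> card S"
proof -
  have "distinct xs" using assms(2) by (simp add: is_cup_def strict_sorted_iff)
  hence "card (set xs) = length xs" by (simp add: distinct_card)
  moreover have "set xs \<subseteq> S" using assms(2) by (simp add: is_cup_def)
  ultimately show ?thesis using assms(1) card_mono by metis
qed

lemma cup_take:
  assumes "is_cup cup S xs"
  shows "is_cup cup S (take k xs)"
  using assms unfolding is_cup_def
  by (auto simp: sorted_wrt_take dest: in_set_takeD)

lemma cup_single: "p \<in> S \<Longrightarrow> is_cup cup S [p]"
  by (simp add: is_cup_def)

lemma cup_pair: "x \<in> S \<Longrightarrow> y \<in> S \<Longrightarrow> x < y \<Longrightarrow> is_cup cup S [x, y]"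
  by (simp add: is_cup_def)

lemma cup_snoc:
  assumes "is_cup cup S (ys @ [w, x])" "y \<in> S" "x < y" "cup w x y"
  shows "is_cup cup S (ys @ [w, x, y])"
proof -
  have srt: "sorted_wrt (<) (ys @ [w, x])" and sub: "set (ys @ [w,x]) \<subseteq> S"
    and c: "\<And>i. 0 < i \<Longrightarrow> i + 1 < length (ys @ [w,x]) \<Longrightarrow>
       cup ((ys @ [w,x]) ! (i - 1)) ((ys @ [w,x]) ! i) ((ys @ [w,x]) ! (i + 1))"
    using assms(1) by (auto simp: is_cup_def)
  have eq: "ys @ [w, x, y] = (ys @ [w, x]) @ [y]" by simp
  have lx: "\<forall>a\<in>set (ys @ [w, x]). a < y"
  proof
    fix a assume a: "a \<in> set (ys @ [w, x])"
    have "a \<le> x"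
    proof (cases "a = x")
      case False
      then have "a \<in> set (ys @ [w])" using a by auto
      moreover have "sorted_wrt (<) ((ys @ [w]) @ [x])" using srt by simp
      ultimately show ?thesis unfolding sorted_wrt_append by auto
    qed simp
    thus "a < y" using assms(3) by simp
  qed
  have "sorted_wrt (<) ((ys @ [w, x]) @ [y])"
    unfolding sorted_wrt_append[of _ "ys @ [w, x]" "[y]"] using lx by (intro conjI srt) auto
  then have "sorted_wrt (<) (ys @ [w, x, y])" using eq by metis
  moreover have "set (ys @ [w, x, y]) \<subseteq> S" using sub assms(2) by auto
  moreover have "cup ((ys @ [w,x,y]) ! (i - 1)) ((ys @ [w,x,y]) ! i) ((ys @ [w,x,y]) ! (i + 1))"
    if "0 < i" "i + 1 < length (ys @ [w,x,y])" for i
  proof (cases "i + 1 < length (ys @ [w,x])")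
    case True
    have e: "(ys @ [w, x, y]) ! k = (ys @ [w, x]) ! k" if "k < length (ys @ [w, x])" for k
      unfolding eq using that by (rule nth_append_left)
    show ?thesis using c[OF \<open>0 < i\<close> True] e True by simp
  next
    case False
    then have "i = length ys + 1" using that by simp
    then show ?thesis using assms(4) by (simp add: nth_append)
  qed
  ultimately show ?thesis by (simp add: is_cup_def)
qed

locale cfg =
  fixes S :: "'a::linorder set" and cup :: "'a \<Rightarrow> 'a \<Rightarrow> 'a \<Rightarrow> bool"
  assumes fin: "finite S"
begin

definition B where "B p = {length xs | xs. is_cup cup S xs \<and> xs \<noteq> [] \<and> last xs = p}"

lemma beta_B: "beta cup S p = Max (B p)" unfolding beta_def B_def ..

lemma B_fin: "finite (B p)"
proof -
  have "B p \<subseteq> {..card S}" using cup_len[OF fin] by (auto simp: B_def)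
  thus ?thesis using finite_subset by blast
qed

lemma beta_ge:
  assumes "is_cup cup S xs" "xs \<noteq> []" "last xs = p"
  shows "length xs \<le> beta cup S p"
proof -
  have "length xs \<in> B p" using assms by (auto simp: B_def)
  thus ?thesis using B_fin unfolding beta_B by (rule Max_ge[rotated])
qed

lemma beta_ex:
  assumes "p \<in> S"
  shows "\<exists>xs. is_cup cup S xs \<and> xs \<noteq> [] \<and> last xs = p \<and> length xs = beta cup S p"
proof -
  have "length [p] \<in> B p" unfolding B_def using cup_single[OF assms, of cup] by (intro CollectI exI[of _ "[p]"]) simp
  hence "B p \<noteq> {}" by auto
  hence "beta cup S p \<in> B p" using B_fin unfolding beta_B by (intro Max_in)
  thus ?thesis by (auto simp: B_def)
qed

lemma beta_pos:
  assumes "p \<in> S" shows "1 \<le> beta cup S p"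
proof -
  obtain xs where "is_cup cup S xs \<and> xs \<noteq> [] \<and> last xs = p \<and> length xs = beta cup S p"
    using beta_ex[OF assms] ..
  hence x: "xs \<noteq> []" "length xs = beta cup S p" by simp_all
  have "0 < length xs" using x(1) by simp
  thus ?thesis using x(2) by linarith
qed

lemma beta_lt:
  assumes cf: "cup_free n cup S" and p: "p \<in> S"
  shows "beta cup S p < n"
proof (rule ccontr)
  assume "\<not> beta cup S p < n"
  obtain xs where "is_cup cup S xs \<and> xs \<noteq> [] \<and> last xs = p \<and> length xs = beta cup S p"
    using beta_ex[OF p] ..
  hence c: "is_cup cup S xs" and l: "length xs \<ge> n" using \<open>\<not> beta cup S p < n\<close> by auto
  have "is_cup cup S (take n xs)" using cup_take[OF c] .
  moreover have "length (take n xs) = n" using l by simp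
  ultimately show False using cf unfolding cup_free_def by blast
qed

lemma split_last2:
  assumes "length xs \<ge> 2"
  obtains ys w where "xs = ys @ [w, last xs]"
proof -
  have lr: "length (rev xs) \<ge> 2" using assms by simp
  obtain a b r where r: "rev xs = a # b # r"
  proof (cases "rev xs")
    case Nil then show ?thesis using lr by simp
  next
    case (Cons a t)
    then show ?thesis using lr that by (cases t) auto
  qed
  hence "xs = rev r @ [b, a]" by (metis append.assoc append_Cons append_Nil rev.simps(2) rev_rev_ident)
  moreover hence "last xs = a" by simp
  ultimately show ?thesis using that by metis
qed

lemma same_beta_slope:
  assumes sl: "slope_labeling cup S s" and x: "x \<in> S" and y: "y \<in> S" and xy: "x < y"
    and eq: "beta cup S x = beta cup S y"
  shows "s x y = 1"
proof -
  obtain xs where "is_cup cup S xs \<and> xs \<noteq> [] \<and> last xs = x \<and> length xs = beta cup S x"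
    using beta_ex[OF x] ..
  hence c: "is_cup cup S xs" and ne: "xs \<noteq> []" and lx: "last xs = x"
    and len: "length xs = beta cup S x" by auto
  show ?thesis
  proof (cases "length xs \<ge> 2")
    case False
    have "length xs \<noteq> 0" using ne by simp
    then have "length xs = 1" using False by linarith
    have "is_cup cup S [x, y]" using cup_pair[OF x y xy] .
    hence "length [x, y] \<le> beta cup S y" using beta_ge[of "[x,y]" y] by simp
    then show ?thesis using \<open>length xs = 1\<close> len eq by simp
  next
    case True
    then obtain ys w where d: "xs = ys @ [w, last xs]" by (rule split_last2)
    hence d2: "xs = ys @ [w, x]" using lx by simp
    have "sorted_wrt (<) xs" "set xs \<subseteq> S" using c by (auto simp: is_cup_def)
    hence w: "w \<in> S" and wx: "w < x" using d2 by (auto simp: sorted_wrt_append)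
    have ncup: "\<not> cup w x y"
    proof
      assume "cup w x y"
      hence "is_cup cup S (ys @ [w, x, y])" using cup_snoc[of cup S ys w x y] c d2 y xy by simp
      hence "length (ys @ [w, x, y]) \<le> beta cup S y" using beta_ge[of "ys @ [w, x, y]" y] by simp
      moreover have "length (ys @ [w, x, y]) = length xs + 1" using d2 by simp
      ultimately show False using len eq by simp
    qed
    have r1: "s w x \<in> {1, 2}" "s x y \<in> {1, 2}" using sl w x y wx xy unfolding slope_labeling_def by auto
    have "\<not> s w x \<le> s x y" using sl w x y wx xy ncup unfolding slope_labeling_def by blast
    thus ?thesis using r1 by auto
  qed
qed

lemma R_card:
  assumes sl: "slope_labeling cup S s"
  shows "card {p \<in> S. beta cup S p = i} \<le> i"
proof (cases "{p \<in> S. beta cup S p = i} = {}")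
  case True
  then show ?thesis by (metis card.empty zero_le)
next
  case False
  define R where "R = {p \<in> S. beta cup S p = i}"
  have fR: "finite R" using fin unfolding R_def by simp
  define L where "L = sorted_list_of_set R"
  have sL: "set L = R" using fR unfolding L_def by simp
  have srt: "sorted_wrt (<) L" unfolding L_def by (rule strict_sorted_list_of_set)
  have lenL: "length L = card R" unfolding L_def by simp
  have neL: "L \<noteq> []" using False sL unfolding R_def by auto
  have cupL: "is_cup cup S L"
    unfolding is_cup_def
  proof (intro conjI allI impI)
    show "sorted_wrt (<) L" by (rule srt)
    show "set L \<subseteq> S" using sL unfolding R_def by auto
  next
    fix k assume k: "0 < k \<and> k + 1 < length L"
    define a where "a = L ! (k - 1)"
    define b where "b = L ! k"
    define c where "c = L ! (k + 1)"
    have inR: "a \<in> R" "b \<in> R" "c \<in> R" unfolding a_def b_def c_def using k sL nth_mem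
      by (metis add_lessD1 less_imp_diff_less)+
    have ab: "a < b" unfolding a_def b_def using sorted_wrt_nth_less[OF srt, of "k - 1" k] k by simp
    have bc: "b < c" unfolding c_def b_def using sorted_wrt_nth_less[OF srt, of k "k + 1"] k by simp
    have "s a b = 1" using same_beta_slope[OF sl _ _ ab] inR unfolding R_def by auto
    moreover have "s b c = 1" using same_beta_slope[OF sl _ _ bc] inR unfolding R_def by auto
    moreover have "a \<in> S" "b \<in> S" "c \<in> S" using inR unfolding R_def by auto
    ultimately have "cup a b c" using sl ab bc unfolding slope_labeling_def by auto
    thus "cup (L ! (k - 1)) (L ! k) (L ! (k + 1))" unfolding a_def b_def c_def .
  qed
  have "last L \<in> R" using neL sL by auto
  hence "beta cup S (last L) = i" unfolding R_def by simp
  moreover have "length L \<le> beta cup S (last L)" by (rule beta_ge[OF cupL neL refl])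
  ultimately show ?thesis using lenL unfolding R_def by simp
qed

end

lemma sum_id_1: "(\<Sum>i\<in>{1..m}. i) = m * (m + 1) div (2::nat)"
  by (induction m) auto

theorem lemma5p9:
  fixes S :: "'a::linorder set" and cup :: "'a \<Rightarrow> 'a \<Rightarrow> 'a \<Rightarrow> bool"
    and s :: "'a \<Rightarrow> 'a \<Rightarrow> nat" and n :: nat
  assumes "n \<ge> 3"
    and "finite S"
    and "cap_free 4 cup S"
    and "cup_free n cup S"
    and "card S \<ge> ((n - 1) choose 2) + 1"
    and "slope_labeling cup S s"
  shows "\<forall>i \<in> {1..n-1}. {p \<in> S. beta cup S p = i} \<noteq> {}"
proof -
  interpret cfg S cup by unfold_locales (rule assms(2))
  note fin = assms(2) and cf = assms(4) and sl = assms(6)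
  define R where "R i = {p \<in> S. beta cup S p = i}" for i
  have top: "\<exists>q\<in>S. beta cup S q = n - 1"
  proof (rule ccontr)
    assume nq: "\<not> (\<exists>q\<in>S. beta cup S q = n - 1)"
    have "S \<subseteq> (\<Union>i\<in>{1..n-2}. R i)"
    proof
      fix p assume p: "p \<in> S"
      have "1 \<le> beta cup S p" by (rule beta_pos[OF p])
      moreover have "beta cup S p < n" by (rule beta_lt[OF cf p])
      moreover have "beta cup S p \<noteq> n - 1" using nq p by blast
      ultimately have "beta cup S p \<in> {1..n-2}" by simp
      thus "p \<in> (\<Union>i\<in>{1..n-2}. R i)" using p unfolding R_def by blast
    qed
    hence "card S \<le> card (\<Union>i\<in>{1..n-2}. R i)"
      by (rule card_mono[rotated]) (auto simp: R_def fin)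
    also have "\<dots> \<le> (\<Sum>i\<in>{1..n-2}. card (R i))" by (rule card_UN_le) simp
    also have "\<dots> \<le> (\<Sum>i\<in>{1..n-2}. i)" unfolding R_def by (intro sum_mono R_card[OF sl])
    also have "\<dots> = (n - 2) * (n - 2 + 1) div 2" by (rule sum_id_1)
    also have "\<dots> = (n - 1) choose 2"
    proof -
      have "n - 2 + 1 = n - 1" "n - 1 - 1 = n - 2" using assms(1) by auto
      thus ?thesis by (simp add: choose_two mult.commute)
    qed
    finally show False using assms(5) by simp
  qed
  show ?thesis
  proof
    fix i assume i: "i \<in> {1..n-1}"
    define T where "T = {p \<in> S. i \<le> beta cup S p}"
    have fT: "finite T" using fin unfolding T_def by simp
    have neT: "T \<noteq> {}" using top i unfolding T_def by force
    define y where "y = Min T"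
    have yT: "y \<in> T" unfolding y_def using fT neT by (rule Min_in)
    hence y: "y \<in> S" "i \<le> beta cup S y" unfolding T_def by auto
    have ymin: "\<And>z. z \<in> T \<Longrightarrow> y \<le> z" unfolding y_def using fT by simp
    obtain xs where "is_cup cup S xs \<and> xs \<noteq> [] \<and> last xs = y \<and> length xs = beta cup S y"
      using beta_ex[OF y(1)] ..
    hence c: "is_cup cup S xs" and ne: "xs \<noteq> []" and lx: "last xs = y"
      and len: "length xs = beta cup S y" by simp_all
    have "beta cup S y = i"
    proof (rule ccontr)
      assume "beta cup S y \<noteq> i"
      hence gt: "i < length xs" using y(2) len by simp
      define d where "d = xs ! (i - 1)"
      have i1: "1 \<le> i" using i by simp
      have ct: "is_cup cup S (take i xs)" by (rule cup_take[OF c])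
      have tne: "take i xs \<noteq> []" using i1 ne by simp
      have "last (take i xs) = take i xs ! (length (take i xs) - 1)"
        using tne by (rule last_conv_nth)
      also have "\<dots> = take i xs ! (i - 1)" using gt by simp
      also have "\<dots> = d" unfolding d_def using i1 by simp
      finally have ltk: "last (take i xs) = d" .
      have "length (take i xs) \<le> beta cup S d" using beta_ge[OF ct tne ltk] .
      hence "i \<le> beta cup S d" using gt by simp
      moreover have "d \<in> S" using c gt unfolding d_def is_cup_def by auto
      ultimately have "d \<in> T" unfolding T_def by simp
      hence "y \<le> d" by (rule ymin)
      moreover have "d < y"
      proof -
        have "sorted_wrt (<) xs" using c by (simp add: is_cup_def)
        hence "xs ! (i - 1) < xs ! (length xs - 1)"
          using sorted_wrt_nth_less[of "(<)" xs "i - 1" "length xs - 1"] gt i1 by simp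
        thus ?thesis unfolding d_def using lx ne by (simp add: last_conv_nth)
      qed
      ultimately show False by simp
    qed
    thus "{p \<in> S. beta cup S p = i} \<noteq> {}" using y(1) by blast
  qed
qed

end
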